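(* Let $K$ be a field of characteristic $p>0$, $e\in\mathbb N_{>0}$, $m\in\mathbb N_{>0}$. Every $m$-truncated $e$-dimensional HS-derivation $(D_{\mathbf i})_{\mathbf i\in[p^m]^e}$ on $K$ (over $\mathbb F_p$) extends to an $e$-dimensional HS-derivation $(D'_{\mathbf i})_{\mathbf i\in\mathbb N^e}$ on $K$, i.e. $D'_{\mathbf i}=D_{\mathbf i}$ for all $\mathbf i\in[p^m]^e$.
   Context: For $m\in\mathbb N_{>0}\cup\{\infty\}$ and a ring $R$ of characteristic $p$ put $R[\bar v]:=R[X_1,\dots,X_e]/(X_1^{p^m},\dots,X_e^{p^m})$, with $v_i$ the image of $X_i$ (for $m=\infty$, $R[\bar v]:=R[[X_1,\dots,X_e]]$). Let $[p^m]=\{0,\dots,p^m-1\}$ ($[p^\infty]=\mathbb N$), $\bar v^{\mathbf i}=v_1^{i_1}\cdots v_e^{i_e}$. An $m$-truncated $e$-dimensional HS-derivation on $R$ (over $\mathbb F_p$) is a family $(D_{\mathbf i}:R\to R)_{\mathbf i\in[p^m]^e}$ such that $r\mapsto\sum_{\mathbf i}D_{\mathbf i}(r)\bar v^{\mathbf i}$ is a ring homomorphism $R\to R[\bar v]$ and $D_{\mathbf 0}=\mathrm{id}_R$; for $m=\infty$ it is called an $e$-dimensional HS-derivation. *)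

theory Defs
  imports Main
begin

text \<open>Multi-indices in N^e are represented as functions nat => nat vanishing
  outside {..<e}. The index set [p^m]^e is trunc_idx e (p^m).\<close>

definition mindex :: "nat \<Rightarrow> (nat \<Rightarrow> nat) set" where
  "mindex e = {i. \<forall>l\<ge>e. i l = 0}"

definition trunc_idx :: "nat \<Rightarrow> nat \<Rightarrow> (nat \<Rightarrow> nat) set" where
  "trunc_idx e N = {i \<in> mindex e. \<forall>l<e. i l < N}"

text \<open>HS_family I D: the map r |-> sum_i D_i(r) v^i is a ring homomorphism
  R -> R[v] (coefficientwise, for all coefficient indices k in I) and D_0 = id.
  With I = trunc_idx e (p^m) this is R[X]/(X_1^(p^m),...,X_e^(p^m)) (products
  of monomials with some exponent >= p^m vanish, so the coefficient of v^k,
  k in I, of a product is the sum over i + j = k); with I = mindex e it is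
  the power series ring. Additive maps are automatically F_p-linear.\<close>

definition HS_family :: "(nat \<Rightarrow> nat) set \<Rightarrow> ((nat \<Rightarrow> nat) \<Rightarrow> 'a::comm_ring_1 \<Rightarrow> 'a) \<Rightarrow> bool" where
  "HS_family I D \<longleftrightarrow>
     D (\<lambda>_. 0) = id \<and>
     (\<forall>k\<in>I. \<forall>x y. D k (x + y) = D k x + D k y) \<and>
     (\<forall>k\<in>I. D k 1 = (if k = (\<lambda>_. 0) then 1 else 0)) \<and>
     (\<forall>k\<in>I. \<forall>x y. D k (x * y) =
        (\<Sum>i\<in>{i. \<forall>l. i l \<le> k l}. D i x * D (\<lambda>l. k l - i l) y))"

definition truncated_HS_derivation ::
  "nat \<Rightarrow> nat \<Rightarrow> ((nat \<Rightarrow> nat) \<Rightarrow> 'a::comm_ring_1 \<Rightarrow> 'a) \<Rightarrow> bool" where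
  "truncated_HS_derivation m e D \<longleftrightarrow> HS_family (trunc_idx e (CHAR('a) ^ m)) D"

definition HS_derivation :: "nat \<Rightarrow> ((nat \<Rightarrow> nat) \<Rightarrow> 'a::comm_ring_1 \<Rightarrow> 'a) \<Rightarrow> bool" where
  "HS_derivation e D \<longleftrightarrow> HS_family (mindex e) D"

end

theory Submission
  imports Defs "HOL-Computational_Algebra.Polynomial_Factorial" "HOL-Computational_Algebra.Primes"
begin

definition fsupp :: "(nat \<Rightarrow> nat) \<Rightarrow> bool" where
  "fsupp k \<longleftrightarrow> finite {l. k l \<noteq> 0}"

definition down :: "(nat \<Rightarrow> nat) \<Rightarrow> (nat \<Rightarrow> nat) set" where
  "down k = {i. \<forall>l. i l \<le> k l}"

lemma finite_down:
  assumes "fsupp k" shows "finite (down k)"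
proof -
  let ?S = "{l. k l \<noteq> 0}"
  have "down k \<subseteq> {f. \<forall>x. (x \<in> ?S \<longrightarrow> f x \<in> {0..Max (k ` ?S)}) \<and> (x \<notin> ?S \<longrightarrow> f x = 0)}"
  proof
    fix i assume "i \<in> down k"
    hence i: "\<And>l. i l \<le> k l" by (auto simp: down_def)
    show "i \<in> {f. \<forall>x. (x \<in> ?S \<longrightarrow> f x \<in> {0..Max (k ` ?S)}) \<and> (x \<notin> ?S \<longrightarrow> f x = 0)}"
    proof (intro CollectI allI conjI impI)
      fix x assume "x \<in> ?S"
      hence "k x \<le> Max (k ` ?S)" using assms by (auto simp: fsupp_def)
      thus "i x \<in> {0..Max (k ` ?S)}" using i[of x] by auto
    next
      fix x assume "x \<notin> ?S" thus "i x = 0" using i[of x] by auto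
    qed
  qed
  moreover have "finite {f. \<forall>x. (x \<in> ?S \<longrightarrow> f x \<in> {0..Max (k ` ?S)}) \<and> (x \<notin> ?S \<longrightarrow> f x = (0::nat))}"
    by (rule finite_set_of_finite_funs) (use assms in \<open>auto simp: fsupp_def\<close>)
  ultimately show ?thesis by (rule finite_subset)
qed

lemma fsupp_le: "fsupp k \<Longrightarrow> i \<in> down k \<Longrightarrow> fsupp i"
  unfolding fsupp_def down_def
  by (rule finite_subset[of _ "{l. k l \<noteq> 0}"]) (auto simp: subset_iff, metis gr0I le_zero_eq)

lemma fsupp_diff: "fsupp k \<Longrightarrow> fsupp (\<lambda>l. k l - i l)"
  unfolding fsupp_def by (rule finite_subset[of _ "{l. k l \<noteq> 0}"]) auto

lemma fsupp_add: "fsupp k \<Longrightarrow> fsupp i \<Longrightarrow> fsupp (\<lambda>l. k l + i l)"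
  unfolding fsupp_def by (rule finite_subset[of _ "{l. k l \<noteq> 0} \<union> {l. i l \<noteq> 0}"]) auto

lemma fsupp_zero[simp]: "fsupp (\<lambda>_. 0)" by (simp add: fsupp_def)

typedef (overloaded) 'a ps = "{f :: (nat \<Rightarrow> nat) \<Rightarrow> 'a::zero. \<forall>k. \<not> fsupp k \<longrightarrow> f k = 0}"
  morphisms coe Abs_ps
  by (rule exI[of _ "\<lambda>_. 0"]) auto

setup_lifting type_definition_ps

lemma coe_nf: "\<not> fsupp k \<Longrightarrow> coe x k = 0"
  using coe[of x] by auto

lemma ps_eqI: "(\<And>k. fsupp k \<Longrightarrow> coe x k = coe y k) \<Longrightarrow> x = y"
  by (metis coe_inject coe_nf ext)

definition conv :: "((nat \<Rightarrow> nat) \<Rightarrow> 'a::comm_ring_1) \<Rightarrow> ((nat \<Rightarrow> nat) \<Rightarrow> 'a) \<Rightarrow> (nat \<Rightarrow> nat) \<Rightarrow> 'a" where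
  "conv f g k = (if fsupp k then (\<Sum>i\<in>down k. f i * g (\<lambda>l. k l - i l)) else 0)"

instantiation ps :: (comm_ring_1) comm_ring_1
begin
lift_definition zero_ps :: "'a ps" is "\<lambda>_. 0" by auto
lift_definition one_ps :: "'a ps" is "\<lambda>k. if k = (\<lambda>_. 0) then 1 else 0" by auto
lift_definition plus_ps :: "'a ps \<Rightarrow> 'a ps \<Rightarrow> 'a ps" is "\<lambda>f g k. f k + g k" by auto
lift_definition minus_ps :: "'a ps \<Rightarrow> 'a ps \<Rightarrow> 'a ps" is "\<lambda>f g k. f k - g k" by auto
lift_definition uminus_ps :: "'a ps \<Rightarrow> 'a ps" is "\<lambda>f k. - f k" by auto
lift_definition times_ps :: "'a ps \<Rightarrow> 'a ps \<Rightarrow> 'a ps" is conv by (auto simp: conv_def)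

lemma coe_times: "coe (x * y) k = (if fsupp k then (\<Sum>i\<in>down k. coe x i * coe y (\<lambda>l. k l - i l)) else 0)"
  by transfer (simp add: conv_def)

instance
proof
  fix a b c :: "'a ps"
  show "a * b * c = a * (b * c)"
  proof (rule ps_eqI)
    fix k :: "nat \<Rightarrow> nat" assume k: "fsupp k"
    have fi: "\<And>i. i \<in> down k \<Longrightarrow> fsupp i" using k fsupp_le by blast
    have "coe (a * b * c) k = (\<Sum>i\<in>down k. (\<Sum>j\<in>down i. coe a j * coe b (\<lambda>l. i l - j l)) * coe c (\<lambda>l. k l - i l))"
      using k fi by (simp add: coe_times)
    also have "\<dots> = (\<Sum>(i,j)\<in>Sigma (down k) down. coe a j * coe b (\<lambda>l. i l - j l) * coe c (\<lambda>l. k l - i l))"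
      unfolding sum_distrib_right by (rule sum.Sigma) (auto simp: finite_down k fi)
    also have "\<dots> = (\<Sum>(j,t)\<in>Sigma (down k) (\<lambda>j. down (\<lambda>l. k l - j l)). coe a j * (coe b t * coe c (\<lambda>l. k l - j l - t l)))"
      apply (rule sum.reindex_bij_witness[where i = "\<lambda>(j,t). (\<lambda>l. j l + t l, j)" and j = "\<lambda>(i,j). (j, \<lambda>l. i l - j l)"])
      apply (auto simp: down_def)
        apply (metis le_trans)
       apply (metis diff_le_mono)
      apply (metis add.commute le_diff_conv2)
      done
    also have "\<dots> = (\<Sum>j\<in>down k. coe a j * (\<Sum>t\<in>down (\<lambda>l. k l - j l). coe b t * coe c (\<lambda>l. k l - j l - t l)))"
      unfolding sum_distrib_left by (rule sum.Sigma[symmetric]) (auto simp: finite_down k fsupp_diff)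
    also have "\<dots> = coe (a * (b * c)) k"
      using k by (simp add: coe_times fsupp_diff)
    finally show "coe (a * b * c) k = coe (a * (b * c)) k" .
  qed
  show "a * b = b * a"
  proof (rule ps_eqI)
    fix k :: "nat \<Rightarrow> nat" assume k: "fsupp k"
    show "coe (a * b) k = coe (b * a) k"
      unfolding coe_times using k
      apply simp
      apply (rule sum.reindex_bij_witness[where i = "\<lambda>i l. k l - i l" and j = "\<lambda>i l. k l - i l"])
      by (auto simp: down_def mult.commute)
  qed
  show "1 * a = a"
  proof (rule ps_eqI)
    fix k :: "nat \<Rightarrow> nat" assume k: "fsupp k"
    have "coe (1 * a) k = (\<Sum>i\<in>down k. (if i = (\<lambda>_. 0) then coe a (\<lambda>l. k l - i l) else 0))"
      using k unfolding coe_times by (auto intro!: sum.cong simp: one_ps.rep_eq)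
    also have "\<dots> = (\<Sum>i\<in>down k. (if i = (\<lambda>_. 0) then coe a k else 0))"
      by (rule sum.cong) auto
    also have "\<dots> = coe a k" using finite_down[OF k] by (subst sum.delta) (auto simp: down_def)
    finally show "coe (1 * a) k = coe a k" .
  qed
  show "(a + b) * c = a * c + b * c"
    by (rule ps_eqI) (simp add: coe_times plus_ps.rep_eq distrib_right sum.distrib)
  show "(0::'a ps) \<noteq> 1"
  proof
    assume "(0::'a ps) = 1"
    hence "coe (0::'a ps) (\<lambda>_. 0) = coe 1 (\<lambda>_. 0)" by simp
    thus False by (simp add: zero_ps.rep_eq one_ps.rep_eq)
  qed
qed (transfer; force simp: algebra_simps)+
end

lemma coe_plus[simp]: "coe (x + y) k = coe x k + coe y k" by transfer simp
lemma coe_minus[simp]: "coe (x - y) k = coe x k - coe y k" by transfer simp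
lemma coe_uminus[simp]: "coe (- x) k = - coe x k" by transfer simp
lemma coe_zero[simp]: "coe 0 k = 0" by transfer simp
lemma coe_one: "coe 1 k = (if k = (\<lambda>_. 0) then 1 else 0)" by transfer simp
lemma coe_sum: "coe (sum f A) k = (\<Sum>x\<in>A. coe (f x) k)"
  by (induction A rule: infinite_finite_induct) auto



definition eqv :: "(nat \<Rightarrow> nat) set \<Rightarrow> 'a::zero ps \<Rightarrow> 'a ps \<Rightarrow> bool" where
  "eqv S x y \<longleftrightarrow> (\<forall>k\<in>S. coe x k = coe y k)"

definition dclosed :: "(nat \<Rightarrow> nat) set \<Rightarrow> bool" where
  "dclosed S \<longleftrightarrow> (\<forall>k\<in>S. fsupp k \<and> (\<forall>i\<in>down k. i \<in> S))"

lemma eqv_refl[simp]: "eqv S x x" by (simp add: eqv_def)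
lemma eqv_sym: "eqv S x y \<Longrightarrow> eqv S y x" by (simp add: eqv_def)
lemma eqv_trans[trans]: "eqv S x y \<Longrightarrow> eqv S y z \<Longrightarrow> eqv S x z" by (simp add: eqv_def)
lemma eqv_subset: "eqv S x y \<Longrightarrow> T \<subseteq> S \<Longrightarrow> eqv T x y" by (auto simp: eqv_def)
lemma eqv_eq_trans[trans]: "x = y \<Longrightarrow> eqv S y z \<Longrightarrow> eqv S x z" by simp
lemma eqv_trans_eq[trans]: "eqv S x y \<Longrightarrow> y = z \<Longrightarrow> eqv S x z" by simp

lemma eqv_add: "eqv S x x' \<Longrightarrow> eqv S y y' \<Longrightarrow> eqv S (x + y) (x' + y')"
  by (simp add: eqv_def)
lemma eqv_diff: "eqv S x x' \<Longrightarrow> eqv S y y' \<Longrightarrow> eqv S (x - y) (x' - y')"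
  by (simp add: eqv_def)
lemma eqv_uminus: "eqv S x x' \<Longrightarrow> eqv S (- x) (- x')"
  by (simp add: eqv_def)

lemma eqv_mult:
  fixes x :: "'a::comm_ring_1 ps"
  assumes S: "dclosed S" and "eqv S x x'" "eqv S y y'"
  shows "eqv S (x * y) (x' * y')"
  unfolding eqv_def
proof
  fix k assume k: "k \<in> S"
  have "\<And>i. i \<in> down k \<Longrightarrow> i \<in> S \<and> (\<lambda>l. k l - i l) \<in> S"
    using S k by (auto simp: dclosed_def down_def)
  thus "coe (x * y) k = coe (x' * y') k"
    using assms(2,3) unfolding coe_times eqv_def by (auto intro!: sum.cong)
qed

lemma eqv_power:
  fixes x :: "'a::comm_ring_1 ps"
  assumes S: "dclosed S" and "eqv S x x'"
  shows "eqv S (x ^ n) (x' ^ n)"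
  by (induction n) (auto intro: eqv_mult assms)

lemma eqv_sum:
  fixes f :: "'b \<Rightarrow> 'a::comm_ring_1 ps"
  shows "(\<And>i. i \<in> A \<Longrightarrow> eqv S (f i) (g i)) \<Longrightarrow> eqv S (sum f A) (sum g A)"
  by (simp add: eqv_def coe_sum)

lemma eqv_mult_left:
  fixes x :: "'a::comm_ring_1 ps"
  shows "dclosed S \<Longrightarrow> eqv S y y' \<Longrightarrow> eqv S (x * y) (x * y')"
  by (rule eqv_mult) auto

lift_definition mono :: "'a::zero \<Rightarrow> (nat \<Rightarrow> nat) \<Rightarrow> 'a ps" is
  "\<lambda>c j k. if fsupp j \<and> k = j then c else 0" by auto

lemma coe_mono: "coe (mono c j) k = (if fsupp j \<and> k = j then c else 0)"
  by transfer simp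

lemma mono_mult:
  fixes c :: "'a::comm_ring_1"
  assumes i: "fsupp i" and j: "fsupp j"
  shows "mono c i * mono d j = mono (c * d) (\<lambda>l. i l + j l)"
proof (rule ps_eqI)
  fix k :: "nat \<Rightarrow> nat" assume k: "fsupp k"
  have "coe (mono c i * mono d j) k = (\<Sum>t\<in>down k. if t = i then (if (\<lambda>l. k l - t l) = j then c * d else 0) else 0)"
    unfolding coe_times using k i j by (auto intro!: sum.cong simp: coe_mono)
  also have "\<dots> = (if i \<in> down k then (if (\<lambda>l. k l - i l) = j then c * d else 0) else 0)"
    using finite_down[OF k] by (subst sum.delta) auto
  also have "\<dots> = coe (mono (c * d) (\<lambda>l. i l + j l)) k"
  proof -
    have "(i \<in> down k \<and> (\<lambda>l. k l - i l) = j) \<longleftrightarrow> k = (\<lambda>l. i l + j l)"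
      by (auto simp: down_def fun_eq_iff) (metis add_diff_inverse_nat not_less le_add1)+
    thus ?thesis using fsupp_add[OF i j] by (auto simp: coe_mono)
  qed
  finally show "coe (mono c i * mono d j) k = coe (mono (c * d) (\<lambda>l. i l + j l)) k" .
qed

lemma mono_one: "mono (1::'a::comm_ring_1) (\<lambda>_. 0) = 1"
  by (rule ps_eqI) (auto simp: coe_mono coe_one)

lemma fsupp_mult: "fsupp j \<Longrightarrow> fsupp (\<lambda>l. n * j l)"
  unfolding fsupp_def by (rule finite_subset[of _ "{l. j l \<noteq> 0}"]) auto

lemma mono_power:
  fixes c :: "'a::comm_ring_1"
  assumes j: "fsupp j"
  shows "mono c j ^ n = mono (c ^ n) (\<lambda>l. n * j l)"
proof (induction n)
  case 0 then show ?case by (simp add: mono_one)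
next
  case (Suc n)
  have "mono c j ^ Suc n = mono c j * mono (c ^ n) (\<lambda>l. n * j l)" by (simp add: Suc)
  also have "\<dots> = mono (c ^ Suc n) (\<lambda>l. Suc n * j l)"
    by (subst mono_mult) (auto simp: j fsupp_mult)
  finally show ?case .
qed

lemma coe_of_nat: "coe (of_nat n :: 'a::comm_ring_1 ps) k = (if k = (\<lambda>_. 0) then of_nat n else 0)"
  by (induction n) (auto simp: coe_one)

lemma freshman:
  fixes x y :: "'a::comm_ring_1"
  assumes p: "prime p" and p0: "of_nat p = (0::'a)"
  shows "(x + y) ^ p = x ^ p + y ^ p"
proof -
  have "p > 0" using p prime_gt_0_nat by blast
  have "(x + y) ^ p = (\<Sum>k\<le>p. of_nat (p choose k) * x ^ k * y ^ (p - k))"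
    by (rule binomial_ring)
  also have "\<dots> = (\<Sum>k\<in>{0,p}. of_nat (p choose k) * x ^ k * y ^ (p - k))"
  proof (intro sum.mono_neutral_right ballI)
    fix k assume "k \<in> {..p} - {0, p}"
    hence k: "k > 0" "k < p" by auto
    have "p dvd (p choose k)"
      by (rule dvd_choose_prime) (use k p in auto)
    then obtain q where "p choose k = p * q" by blast
    hence "of_nat (p choose k) = (0 :: 'a)" by (simp add: p0)
    thus "of_nat (p choose k) * x ^ k * y ^ (p - k) = 0" by simp
  qed auto
  finally show ?thesis
    using \<open>p > 0\<close> by (simp add: add_ac)
qed

lemma freshman_sum:
  fixes f :: "'b \<Rightarrow> 'a::comm_ring_1"
  assumes p: "prime p" and p0: "of_nat p = (0::'a)"
  shows "sum f A ^ p = (\<Sum>i\<in>A. f i ^ p)"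
  using p by (induct A rule: infinite_finite_induct)
     (auto simp: freshman[OF p p0] power_0_left prime_gt_0_nat)

lemma ps_of_nat_p:
  assumes "of_nat p = (0::'a::comm_ring_1)" shows "of_nat p = (0::'a ps)"
  by (rule ps_eqI) (simp add: coe_of_nat assms)

lemma frob_coeff:
  fixes \<mu> :: "'a::comm_ring_1 ps"
  assumes p: "prime p" and p0: "of_nat p = (0::'a)" and k: "fsupp k"
  shows "coe (\<mu> ^ p) k = (\<Sum>j\<in>down k. if (\<lambda>l. p * j l) = k then coe \<mu> j ^ p else 0)"
proof -
  let ?m = "\<Sum>j\<in>down k. mono (coe \<mu> j) j"
  have dc: "dclosed (down k)"
    using k by (auto simp: dclosed_def down_def intro: fsupp_le) (meson le_trans)
  have fj: "\<And>j. j \<in> down k \<Longrightarrow> fsupp j" using k fsupp_le by blast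
  have "eqv (down k) \<mu> ?m"
    unfolding eqv_def
  proof
    fix i assume i: "i \<in> down k"
    have "coe ?m i = (\<Sum>j\<in>down k. if i = j then coe \<mu> j else 0)"
      unfolding coe_sum using fj by (auto intro!: sum.cong simp: coe_mono)
    also have "\<dots> = coe \<mu> i" using finite_down[OF k] i by (subst sum.delta') auto
    finally show "coe \<mu> i = coe ?m i" by simp
  qed
  hence "eqv (down k) (\<mu> ^ p) (?m ^ p)" by (rule eqv_power[OF dc])
  hence "coe (\<mu> ^ p) k = coe (?m ^ p) k" unfolding eqv_def by (auto simp: down_def)
  also have "?m ^ p = (\<Sum>j\<in>down k. mono (coe \<mu> j) j ^ p)"
    by (rule freshman_sum[OF p ps_of_nat_p[OF p0]])
  also have "\<dots> = (\<Sum>j\<in>down k. mono (coe \<mu> j ^ p) (\<lambda>l. p * j l))"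
    by (rule sum.cong) (auto simp: mono_power fj)
  also have "coe \<dots> k = (\<Sum>j\<in>down k. if (\<lambda>l. p * j l) = k then coe \<mu> j ^ p else 0)"
    unfolding coe_sum by (rule sum.cong) (auto simp: coe_mono fj fsupp_mult)
  finally show ?thesis .
qed

lemma trunc_dclosed: "dclosed (trunc_idx e N)"
  unfolding dclosed_def
proof (intro ballI conjI)
  fix k assume k: "k \<in> trunc_idx e N"
  hence k0: "\<And>l. l \<ge> e \<Longrightarrow> k l = 0" and kN: "\<And>l. l < e \<Longrightarrow> k l < N"
    by (auto simp: trunc_idx_def mindex_def)
  have "{l. k l \<noteq> 0} \<subseteq> {..<e}"
  proof
    fix l assume "l \<in> {l. k l \<noteq> 0}"
    thus "l \<in> {..<e}" using k0[of l] by (cases "l < e") auto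
  qed
  thus "fsupp k" unfolding fsupp_def using finite_subset by blast
  fix i assume "i \<in> down k"
  hence i: "\<And>l. i l \<le> k l" by (auto simp: down_def)
  show "i \<in> trunc_idx e N" unfolding trunc_idx_def mindex_def
  proof (intro CollectI conjI allI impI)
    fix l assume "e \<le> l" thus "i l = 0" using i[of l] k0[of l] by simp
  next
    fix l assume "l < e" thus "i l < N" using i[of l] kN[of l] by simp
  qed
qed

lemma trunc_mono: "N \<le> M \<Longrightarrow> trunc_idx e N \<subseteq> trunc_idx e M"
  unfolding trunc_idx_def by auto

lemma frob_trunc:
  fixes \<mu> :: "'a::comm_ring_1 ps"
  assumes p: "prime p" and p0: "of_nat p = (0::'a)" and mu: "eqv (trunc_idx e N) \<mu> 0"
  shows "eqv (trunc_idx e (p * N)) (\<mu> ^ p) 0"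
  unfolding eqv_def
proof
  fix k assume k: "k \<in> trunc_idx e (p * N)"
  have fk: "fsupp k" using trunc_dclosed k by (auto simp: dclosed_def)
  have "coe (\<mu> ^ p) k = (\<Sum>j\<in>down k. if (\<lambda>l. p * j l) = k then coe \<mu> j ^ p else 0)"
    by (rule frob_coeff[OF p p0 fk])
  also have "\<dots> = 0"
  proof (rule sum.neutral, rule ballI)
    fix j assume j: "j \<in> down k"
    show "(if (\<lambda>l. p * j l) = k then coe \<mu> j ^ p else 0) = 0"
    proof (cases "(\<lambda>l. p * j l) = k")
      case True
      have "j \<in> trunc_idx e N"
        unfolding trunc_idx_def mindex_def
      proof (intro CollectI conjI allI impI)
        fix l assume "l \<ge> e"
        hence "k l = 0" using k by (auto simp: trunc_idx_def mindex_def)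
        thus "j l = 0" using True p by (auto simp: fun_eq_iff prime_gt_0_nat dest: spec[of _ l])
      next
        fix l assume "l < e"
        hence "k l < p * N" using k by (auto simp: trunc_idx_def)
        hence "p * j l < p * N" using True by (auto simp: fun_eq_iff dest: spec[of _ l])
        thus "j l < N" by simp
      qed
      hence "coe \<mu> j = 0" using mu by (auto simp: eqv_def)
      thus ?thesis using prime_gt_0_nat[OF p] by (simp add: power_0_left)
    qed simp
  qed
  finally show "coe (\<mu> ^ p) k = coe 0 k" by simp
qed



definition subr :: "'a::comm_ring_1 set \<Rightarrow> bool" where
  "subr L \<longleftrightarrow> 1 \<in> L \<and> (\<forall>x\<in>L. \<forall>y\<in>L. x + y \<in> L \<and> x - y \<in> L \<and> x * y \<in> L)"

lemma subr_1: "subr L \<Longrightarrow> 1 \<in> L" by (simp add: subr_def)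
lemma subr_add: "subr L \<Longrightarrow> x \<in> L \<Longrightarrow> y \<in> L \<Longrightarrow> x + y \<in> L" by (simp add: subr_def)
lemma subr_diff: "subr L \<Longrightarrow> x \<in> L \<Longrightarrow> y \<in> L \<Longrightarrow> x - y \<in> L" by (simp add: subr_def)
lemma subr_mult: "subr L \<Longrightarrow> x \<in> L \<Longrightarrow> y \<in> L \<Longrightarrow> x * y \<in> L" by (simp add: subr_def)
lemma subr_0: assumes "subr L" shows "0 \<in> L"
  using subr_diff[OF assms subr_1[OF assms] subr_1[OF assms]] by simp
lemma subr_uminus: assumes "subr L" "x \<in> L" shows "- x \<in> L"
  using subr_diff[OF assms(1) subr_0[OF assms(1)] assms(2)] by simp
lemma subr_power: "subr L \<Longrightarrow> x \<in> L \<Longrightarrow> x ^ n \<in> L"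
  by (induction n) (auto intro: subr_1 subr_mult)
lemma subr_sum: "subr L \<Longrightarrow> (\<And>i. i \<in> A \<Longrightarrow> f i \<in> L) \<Longrightarrow> sum f A \<in> L"
  by (induction A rule: infinite_finite_induct) (auto intro: subr_0 subr_add)
lemma subr_of_nat: "subr L \<Longrightarrow> of_nat n \<in> L"
  by (induction n) (auto intro: subr_0 subr_add subr_1)

definition Kp :: "'a::field set" where "Kp = range (\<lambda>x. x ^ CHAR('a))"

lemma subr_inverse:
  fixes x :: "'a::field"
  assumes L: "subr L" "Kp \<subseteq> L" and x: "x \<in> L" and c: "CHAR('a) > 0"
  shows "inverse x \<in> L"
proof (cases "x = 0")
  case True thus ?thesis using subr_0[OF L(1)] by simp
next
  case False
  have "inverse x = x ^ (CHAR('a) - 1) * inverse x ^ CHAR('a)"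
    using False c by (cases "CHAR('a)") (auto simp: field_simps)
  moreover have "inverse x ^ CHAR('a) \<in> L" using L(2) by (auto simp: Kp_def)
  ultimately show ?thesis by (metis subr_mult[OF L(1)] subr_power[OF L(1) x])
qed

definition inL :: "'a::comm_ring_1 set \<Rightarrow> 'a poly \<Rightarrow> bool" where
  "inL L f \<longleftrightarrow> (\<forall>i. coeff f i \<in> L)"

lemma inL_add: "subr L \<Longrightarrow> inL L f \<Longrightarrow> inL L g \<Longrightarrow> inL L (f + g)"
  by (simp add: inL_def subr_add)
lemma inL_diff: "subr L \<Longrightarrow> inL L f \<Longrightarrow> inL L g \<Longrightarrow> inL L (f - g)"
  by (simp add: inL_def subr_diff)
lemma inL_mult: "subr L \<Longrightarrow> inL L f \<Longrightarrow> inL L g \<Longrightarrow> inL L (f * g)"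
  by (auto simp: inL_def coeff_mult intro!: subr_sum subr_mult)
lemma inL_smult: "subr L \<Longrightarrow> c \<in> L \<Longrightarrow> inL L g \<Longrightarrow> inL L (smult c g)"
  by (simp add: inL_def subr_mult)
lemma inL_monom: "subr L \<Longrightarrow> c \<in> L \<Longrightarrow> inL L (monom c n)"
  by (simp add: inL_def coeff_monom subr_0)
lemma inL_const: "subr L \<Longrightarrow> c \<in> L \<Longrightarrow> inL L [:c:]"
  by (simp add: inL_def coeff_pCons subr_0 split: nat.split)
lemma inL_0: "subr L \<Longrightarrow> inL L 0"
  by (simp add: inL_def subr_0)
lemma inL_pCons: "inL L (pCons c f) \<longleftrightarrow> c \<in> L \<and> inL L f"
  by (auto simp: inL_def coeff_pCons split: nat.split)

lemma poly_div_inL: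
  fixes f m :: "'a::comm_ring_1 poly"
  assumes L: "subr L" and m: "lead_coeff m = 1" "inL L m" and f: "inL L f"
  shows "\<exists>q t. inL L q \<and> inL L t \<and> f = m * q + t \<and> (t = 0 \<or> degree t < degree m)"
  using f
proof (induction "degree f" arbitrary: f rule: less_induct)
  case less
  show ?case
  proof (cases "f = 0 \<or> degree f < degree m")
    case True
    thus ?thesis using less.prems by (intro exI[of _ 0] exI[of _ f]) (auto simp: inL_0[OF L])
  next
    case False
    define n where "n = degree f"
    define d where "d = degree m"
    have dn: "d \<le> n" using False by (simp add: n_def d_def)
    define c where "c = lead_coeff f"
    define f' where "f' = f - monom c (n - d) * m"
    have cL: "c \<in> L" using less.prems by (simp add: inL_def c_def)
    have f'L: "inL L f'" unfolding f'_def
      by (intro inL_diff inL_mult inL_monom L cL m less.prems)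
    have hi: "\<forall>i>n. coeff f' i = 0"
    proof (intro allI impI)
      fix i assume i: "i > n"
      have "coeff f i = 0" using i by (simp add: n_def coeff_eq_0)
      moreover have "coeff m (i - (n - d)) = 0" using i dn by (intro coeff_eq_0) (simp add: d_def)
      ultimately show "coeff f' i = 0" using i by (simp add: f'_def coeff_monom_mult)
    qed
    have cn: "coeff f' n = 0"
      using dn m(1) by (simp add: f'_def coeff_monom_mult c_def n_def d_def)
    have f'deg: "f' = 0 \<or> degree f' < n"
    proof (cases "f' = 0")
      case False
      hence "coeff f' (degree f') \<noteq> 0" by simp
      moreover have "degree f' \<le> n" using hi by (rule degree_le)
      ultimately show ?thesis using cn by (cases "degree f' = n") auto
    qed simp
    have ff: "f = m * monom c (n - d) + f'" by (simp add: f'_def mult.commute)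
    show ?thesis
    proof (cases "f' = 0")
      case True
      thus ?thesis using ff by (intro exI[of _ "monom c (n - d)"] exI[of _ 0]) (auto simp: inL_monom[OF L cL] inL_0[OF L])
    next
      case False
      with f'deg have "degree f' < degree f" by (simp add: n_def)
      from less.hyps[OF this f'L] obtain q t where qt: "inL L q" "inL L t" "f' = m * q + t" "t = 0 \<or> degree t < degree m"
        by blast
      show ?thesis
        using qt ff by (intro exI[of _ "monom c (n - d) + q"] exI[of _ t])
          (auto simp: inL_add[OF L] inL_monom[OF L cL] algebra_simps)
    qed
  qed
qed

lemma coeff_linear_power_pred:
  fixes b :: "'a::comm_ring_1"
  shows "coeff ([:b, 1:] ^ Suc n) n = of_nat (Suc n) * b"
proof (induction n)
  case 0 then show ?case by simp
next
  case (Suc n)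
  have "[:b, 1:] ^ Suc (Suc n) = smult b ([:b, 1:] ^ Suc n) + pCons 0 ([:b, 1:] ^ Suc n)"
    by (simp del: power_Suc add: power_Suc[of _ "Suc n"])
  hence "coeff ([:b, 1:] ^ Suc (Suc n)) (Suc n) = b * coeff ([:b, 1:] ^ Suc n) (Suc n) + coeff ([:b, 1:] ^ Suc n) n"
    by simp
  also have "\<dots> = b + of_nat (Suc n) * b"
    using coeff_linear_power[of b "Suc n"] Suc by simp
  finally show ?case by (simp add: algebra_simps)
qed

lemma frob_poly:
  fixes a :: "'a::field"
  assumes c: "CHAR('a) > 0"
  shows "[:- a, 1:] ^ CHAR('a) = monom 1 (CHAR('a)) - [:a ^ CHAR('a):]"
proof -
  let ?p = "CHAR('a)"
  have p: "prime ?p" using prime_CHAR_semidom[OF c] .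
  have p0: "of_nat ?p = (0 :: 'a poly)" by (simp add: of_nat_poly)
  have "[:- a, 1:] = monom 1 1 + [:- a:]" by (simp add: monom_altdef)
  hence "[:- a, 1:] ^ ?p = monom 1 1 ^ ?p + [:- a:] ^ ?p"
    using freshman[OF p p0] by simp
  also have "\<dots> = monom 1 ?p + [:(- a) ^ ?p:]"
    by (simp add: monom_altdef poly_const_pow flip: power_mult)
  also have "(- a) ^ ?p = - (a ^ ?p)"
    by (rule minus_power_prime_CHAR) (use p in auto)
  finally show ?thesis by simp
qed

lemma dvd_prime_pow_unit:
  fixes q s :: "'a::field poly"
  assumes pe: "prime_elem q" and ns: "\<not> q dvd s" and d: "s dvd q ^ n"
  shows "is_unit s"
  using d
proof (induction n)
  case 0 thus ?case by simp
next
  case (Suc n)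
  from Suc.prems obtain w where w: "q ^ Suc n = s * w" by (elim dvdE)
  have "q dvd q ^ Suc n" by simp
  hence "q dvd s * w" by (simp only: w)
  hence "q dvd w" using ns prime_elem_dvd_mult_iff[OF pe] by blast
  then obtain w' where w': "w = q * w'" by (elim dvdE)
  have "q \<noteq> 0" using pe by auto
  have "q * q ^ n = q * (s * w')" using w w' by (simp add: algebra_simps)
  hence "q ^ n = s * w'" using \<open>q \<noteq> 0\<close> by simp
  thus ?case using Suc.IH by simp
qed

lemma lin_indep:
  fixes a :: "'a::field"
  assumes c: "CHAR('a) > 0" and L: "subr L" "Kp \<subseteq> L" and a: "a \<notin> L"
    and t: "inL L t" "t \<noteq> 0" "degree t < CHAR('a)" "poly t a = 0"
  shows False
proof -
  let ?p = "CHAR('a)"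
  let ?P = "\<lambda>r. r \<noteq> 0 \<and> inL L r \<and> poly r a = 0"
  have "\<exists>r. ?P r \<and> (\<forall>r'. ?P r' \<longrightarrow> degree r \<le> degree r')"
  proof -
    have "\<exists>n. \<exists>r. ?P r \<and> degree r = n" using t by blast
    from exists_least_iff[THEN iffD1, OF this] obtain n where
      n: "\<exists>r. ?P r \<and> degree r = n" and nl: "\<forall>m<n. \<not> (\<exists>r. ?P r \<and> degree r = m)" by blast
    from n obtain r where "?P r" "degree r = n" by blast
    thus ?thesis using nl by (intro exI[of _ r]) (auto simp: not_less[symmetric])
  qed
  then obtain r0 where r0: "?P r0" and r0min: "\<And>r'. ?P r' \<Longrightarrow> degree r0 \<le> degree r'" by blast
  define r where "r = smult (inverse (lead_coeff r0)) r0"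
  have lc: "lead_coeff r0 \<in> L" using r0 by (simp add: inL_def)
  have rP: "?P r" using r0 by (auto simp: r_def intro!: inL_smult L subr_inverse c lc)
  have rdeg: "degree r = degree r0" by (simp add: r_def)
  have rmin: "\<And>r'. ?P r' \<Longrightarrow> degree r \<le> degree r'" using r0min rdeg by simp
  have rmonic: "lead_coeff r = 1" using r0 by (simp add: r_def)
  define d where "d = degree r"
  have dp: "d < ?p" using rmin[of t] t by (simp add: d_def)
  have d1: "d \<ge> 1"
  proof (rule ccontr)
    assume "\<not> d \<ge> 1"
    hence "degree r = 0" by (simp add: d_def)
    hence "r = [:1:]" using rmonic by (metis degree_eq_zeroE lead_coeff_pCons(2) pCons_0_0)
    thus False using rP by simp
  qed
  let ?g = "monom 1 ?p - [:a ^ ?p:]"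
  have apL: "a ^ ?p \<in> L" using L(2) by (auto simp: Kp_def)
  have gL: "inL L ?g" by (intro inL_diff inL_monom inL_const L(1) subr_1 apL)
  from poly_div_inL[OF L(1) rmonic _ gL] rP obtain q t' where
    qt: "inL L q" "inL L t'" "?g = r * q + t'" "t' = 0 \<or> degree t' < degree r" by blast
  have "poly ?g a = 0" by (simp add: poly_monom)
  hence "poly t' a = 0" using qt(3) rP by (metis add.left_neutral mult_zero_left poly_add poly_mult)
  have "t' = 0"
  proof (rule ccontr)
    assume "t' \<noteq> 0"
    hence "degree r \<le> degree t'" using rmin qt(2) \<open>poly t' a = 0\<close> by blast
    thus False using qt(4) \<open>t' \<noteq> 0\<close> by simp
  qed
  hence rdvd: "r dvd [:- a, 1:] ^ ?p" using qt(3) frob_poly[OF c] by simp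
  have "r \<noteq> 0" using rP by simp
  from order_decomp[OF this, of a] obtain s where s: "r = [:- a, 1:] ^ order a r * s" "\<not> [:- a, 1:] dvd s"
    by blast
  have sdvd: "s dvd [:- a, 1:] ^ ?p" using rdvd s(1) by (metis dvd_mult_right)
  have pe: "prime_elem [:- a, 1::'a:]" by (rule prime_elem_linear_field_poly) simp
  have "is_unit s" by (rule dvd_prime_pow_unit[OF pe s(2) sdvd])
  moreover have "s \<noteq> 0" using s(1) \<open>r \<noteq> 0\<close> by auto
  ultimately have "degree s = 0" using is_unit_iff_degree by blast
  then obtain u where u: "s = [:u:]" by (rule degree_eq_zeroE)
  have e: "lead_coeff ([:- a, 1:] ^ order a r * s) = lead_coeff ([:- a, 1:] ^ order a r) * lead_coeff s"
    by (rule lead_coeff_mult)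
  have "lead_coeff r = lead_coeff ([:- a, 1:] ^ order a r) * lead_coeff s"
    using e by (simp only: s(1)[symmetric])
  also have "\<dots> = u" by (simp add: u lead_coeff_power)
  finally have "lead_coeff r = u" .
  hence "u = 1" using rmonic by simp
  hence rq: "r = [:- a, 1:] ^ order a r" using s(1) u by simp
  hence dord: "d = order a r" unfolding d_def by (metis degree_linear_power)
  define d' where "d' = d - 1"
  have d': "d = Suc d'" using d1 by (simp add: d'_def)
  have r2: "r = [:- a, 1:] ^ Suc d'" using rq unfolding dord[symmetric] d' .
  have "coeff r d' = coeff ([:- a, 1:] ^ Suc d') d'" by (subst r2) (rule refl)
  also have "\<dots> = of_nat (Suc d') * (- a)" by (rule coeff_linear_power_pred)
  finally have "coeff r d' = of_nat d * (- a)" using d' by simp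
  moreover have "coeff r d' \<in> L" using rP by (simp add: inL_def)
  ultimately have "of_nat d * (- a) \<in> L" by simp
  moreover have "of_nat d \<noteq> (0::'a)"
    using dp d1 by (auto simp: of_nat_eq_0_iff_char_dvd dest: dvd_imp_le)
  ultimately have m1: "of_nat d * (- a) \<in> L" by simp
  have "inverse (of_nat d :: 'a) \<in> L" using subr_inverse[OF L subr_of_nat[OF L(1)] c] .
  hence mm: "inverse (of_nat d) * (of_nat d * (- a)) \<in> L" using subr_mult[OF L(1) _ m1] by blast
  have eq: "inverse (of_nat d) * (of_nat d * (- a)) = - a"
    using \<open>of_nat d \<noteq> 0\<close> by (simp add: mult.assoc[symmetric])
  have "- a \<in> L" using mm unfolding eq .
  hence "a \<in> L" using subr_uminus[OF L(1)] by fastforce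
  thus False using a by simp
qed

lemma divides_g:
  fixes a :: "'a::field"
  assumes c: "CHAR('a) > 0" and L: "subr L" "Kp \<subseteq> L" and a: "a \<notin> L"
    and f: "inL L f" "poly f a = 0"
  shows "\<exists>q. inL L q \<and> f = (monom 1 (CHAR('a)) - [:a ^ CHAR('a):]) * q"
proof -
  let ?p = "CHAR('a)"
  let ?g = "monom 1 ?p - [:a ^ ?p:]"
  have apL: "a ^ ?p \<in> L" using L(2) by (auto simp: Kp_def)
  have gL: "inL L ?g" by (intro inL_diff inL_monom inL_const L(1) subr_1 apL)
  have "?g = monom 1 ?p + [:- (a ^ ?p):]" by simp
  also have "degree \<dots> = ?p" using c by (subst degree_add_eq_left) (auto simp: degree_monom_eq)
  finally have gd: "degree ?g = ?p" .
  have gm: "lead_coeff ?g = 1" using c gd by (cases "CHAR('a)") auto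
  from poly_div_inL[OF L(1) gm gL f(1)] obtain q t where
    qt: "inL L q" "inL L t" "f = ?g * q + t" "t = 0 \<or> degree t < degree ?g" by blast
  have "poly ?g a = 0" by (simp add: poly_monom)
  hence "poly t a = 0" using qt(3) f(2) by (metis add.left_neutral mult_zero_left poly_add poly_mult)
  have "t = 0"
  proof (rule ccontr)
    assume "t \<noteq> 0"
    thus False using lin_indep[OF c L a qt(2)] qt(4) gd \<open>poly t a = 0\<close> by auto
  qed
  thus ?thesis using qt by auto
qed



definition reduced :: "nat \<Rightarrow> nat \<Rightarrow> 'a::zero ps \<Rightarrow> bool" where
  "reduced e M z \<longleftrightarrow> (\<forall>k. k \<notin> trunc_idx e M \<longrightarrow> coe z k = 0)"

lemma trunc_fsupp: "k \<in> trunc_idx e M \<Longrightarrow> fsupp k"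
  using trunc_dclosed by (auto simp: dclosed_def)

lift_definition red :: "nat \<Rightarrow> nat \<Rightarrow> 'a::zero ps \<Rightarrow> 'a ps" is
  "\<lambda>e M f k. if k \<in> trunc_idx e M then f k else 0"
  using trunc_fsupp by auto

lemma coe_red: "coe (red e M z) k = (if k \<in> trunc_idx e M then coe z k else 0)"
  by transfer simp

lemma red_eqv: "eqv (trunc_idx e M) (red e M z) z"
  by (simp add: eqv_def coe_red)
lemma reduced_red: "reduced e M (red e M z)"
  by (simp add: reduced_def coe_red)
lemma reduced_eq: "reduced e M z \<Longrightarrow> reduced e M w \<Longrightarrow> eqv (trunc_idx e M) z w \<Longrightarrow> z = w"
  unfolding reduced_def eqv_def by (metis coe_inject ext)
lemma red_reduced: "reduced e M z \<Longrightarrow> red e M z = z"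
  by (rule reduced_eq[OF reduced_red]) (auto intro: red_eqv)
lemma red_add: "red e M (x + y) = red e M x + red e M y"
  by (rule ps_eqI) (simp add: coe_red)
lemma red_diff: "red e M (x - y) = red e M x - red e M y"
  by (rule ps_eqI) (simp add: coe_red)
lemma red_cong: "eqv (trunc_idx e M) x y \<Longrightarrow> red e M x = red e M y"
  by (rule ps_eqI) (auto simp: coe_red eqv_def)
lemma reduced_add: "reduced e M x \<Longrightarrow> reduced e M y \<Longrightarrow> reduced e M (x + y)"
  by (simp add: reduced_def)
lemma reduced_diff: "reduced e M x \<Longrightarrow> reduced e M y \<Longrightarrow> reduced e M (x - y)"
  by (simp add: reduced_def)

lemma poly_eqv:
  fixes P Q :: "'a::comm_ring_1 ps poly"
  assumes S: "dclosed S" and c: "\<And>i. eqv S (coeff P i) (coeff Q i)"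
  shows "eqv S (poly P b) (poly Q b)"
  using c
proof (induction P Q rule: poly_induct2)
  case 0 thus ?case by simp
next
  case (pCons a p c q)
  have "eqv S a c" using pCons.prems[of 0] by simp
  moreover have "eqv S (poly p b) (poly q b)"
    using pCons.prems by (intro pCons.IH) (metis coeff_pCons_Suc)
  ultimately show ?case by (simp, intro eqv_add eqv_mult[OF S]) auto
qed

lemma eqv_1_power:
  fixes x :: "'a::comm_ring_1 ps"
  assumes "dclosed S" "eqv S x 1"
  shows "eqv S (x ^ n) 1"
  using eqv_power[OF assms, of n] by simp

locale ext_setup =
  fixes e N p :: nat and phi :: "'a::field \<Rightarrow> 'a ps"
  assumes p_def: "p = CHAR('a)"
  and charp: "CHAR('a) > 0"
  and phi_red: "\<And>x. reduced e N (phi x)"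
  and phi_add: "\<And>x y. phi (x + y) = phi x + phi y"
  and phi_mult: "\<And>x y. eqv (trunc_idx e N) (phi (x * y)) (phi x * phi y)"
  and phi_one: "eqv (trunc_idx e N) (phi 1) 1"
begin

abbreviation "TN \<equiv> trunc_idx e N"
abbreviation "TP \<equiv> trunc_idx e (p * N)"

lemma pprime: "prime p" using prime_CHAR_semidom[OF charp] p_def by simp
lemma p0: "of_nat p = (0::'a)" by (simp add: p_def)
lemma p0ps: "of_nat p = (0::'a ps)" by (rule ps_of_nat_p[OF p0])
lemma TN_TP: "TN \<subseteq> TP"
  using charp p_def by (intro trunc_mono) simp
lemma dcN: "dclosed TN" by (rule trunc_dclosed)
lemma dcP: "dclosed TP" by (rule trunc_dclosed)

lemma phi_0: "phi 0 = 0" using phi_add[of 0 0] by simp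
lemma phi_minus: "phi (x - y) = phi x - phi y"
  using phi_add[of "x - y" y] by (simp add: algebra_simps)

lemma phi_power: "eqv TN (phi (x ^ n)) (phi x ^ n)"
proof (induction n)
  case 0 thus ?case using phi_one by simp
next
  case (Suc n)
  have "eqv TN (phi (x * x ^ n)) (phi x * phi (x ^ n))" by (rule phi_mult)
  also have "eqv TN (phi x * phi (x ^ n)) (phi x * phi x ^ n)"
    by (rule eqv_mult_left[OF dcN Suc])
  finally show ?case by simp
qed

lemma phi_poly: "eqv TN (phi (poly f a)) (poly (map_poly phi f) (phi a))"
proof (induction f)
  case 0 thus ?case by (simp add: phi_0)
next
  case (pCons c f)
  have "phi (poly (pCons c f) a) = phi c + phi (a * poly f a)" by (simp add: phi_add)
  also have "eqv TN \<dots> (phi c + phi a * poly (map_poly phi f) (phi a))"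
    by (intro eqv_add eqv_refl eqv_trans[OF phi_mult] eqv_mult_left[OF dcN pCons.IH])
  also have "\<dots> = poly (map_poly phi (pCons c f)) (phi a)" by (simp add: map_poly_pCons phi_0)
  finally show ?case .
qed

lemma frob_inj: "(x::'a) ^ p = y ^ p \<Longrightarrow> x = y"
proof -
  assume "x ^ p = y ^ p"
  have "x ^ p = (x - y + y) ^ p" by simp
  also have "\<dots> = (x - y) ^ p + y ^ p" by (rule freshman[OF pprime p0])
  finally have "(x - y) ^ p = 0" using \<open>x ^ p = y ^ p\<close> by simp
  thus "x = y" by simp
qed

lemma frob_diff:
  fixes x y :: "'b::comm_ring_1"
  assumes "of_nat p = (0::'b)"
  shows "(x - y) ^ p = x ^ p - y ^ p"
proof -
  have "x ^ p = (x - y + y) ^ p" by simp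
  also have "\<dots> = (x - y) ^ p + y ^ p" by (rule freshman[OF pprime assms])
  finally show ?thesis by simp
qed

definition base :: "('a \<times> 'a ps) set" where
  "base = {(x ^ p, red e (p * N) (phi x ^ p)) | x. True}"

definition good :: "('a \<times> 'a ps) set \<Rightarrow> bool" where
  "good G \<longleftrightarrow>
    (\<forall>x u y w. (x, u) \<in> G \<longrightarrow> (y, w) \<in> G \<longrightarrow>
        (x + y, u + w) \<in> G \<and> (x - y, u - w) \<in> G \<and> (\<exists>z. (x * y, z) \<in> G \<and> eqv TP z (u * w))) \<and>
    (\<forall>x u u'. (x, u) \<in> G \<longrightarrow> (x, u') \<in> G \<longrightarrow> u = u') \<and>
    (\<forall>x u. (x, u) \<in> G \<longrightarrow> reduced e (p * N) u \<and> eqv TN u (phi x)) \<and>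
    base \<subseteq> G"

lemma frob_mu:
  fixes z w :: "'a ps"
  assumes "eqv TN z w"
  shows "eqv TP (z ^ p) (w ^ p)"
proof -
  have "eqv TN (z - w) 0" using assms by (simp add: eqv_def)
  hence "eqv TP ((z - w) ^ p) 0" by (rule frob_trunc[OF pprime p0])
  thus ?thesis by (simp add: frob_diff[OF p0ps] eqv_def)
qed

lemma good_base: "good base"
  unfolding good_def
proof (intro conjI allI impI)
  fix x u y w assume xu: "(x, u) \<in> base" and yw: "(y, w) \<in> base"
  from xu obtain x0 where x0: "x = x0 ^ p" "u = red e (p * N) (phi x0 ^ p)" by (auto simp: base_def)
  from yw obtain y0 where y0: "y = y0 ^ p" "w = red e (p * N) (phi y0 ^ p)" by (auto simp: base_def)
  have "x + y = (x0 + y0) ^ p" using x0 y0 by (simp add: freshman[OF pprime p0])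
  moreover have "u + w = red e (p * N) (phi (x0 + y0) ^ p)"
    using x0 y0 by (simp add: phi_add freshman[OF pprime p0ps] red_add)
  ultimately show "(x + y, u + w) \<in> base" by (auto simp: base_def)
  have "x - y = (x0 - y0) ^ p" using x0 y0 by (simp add: frob_diff[OF p0])
  moreover have "u - w = red e (p * N) (phi (x0 - y0) ^ p)"
    using x0 y0 by (simp add: phi_minus frob_diff[OF p0ps] red_diff)
  ultimately show "(x - y, u - w) \<in> base" by (auto simp: base_def)
  have "x * y = (x0 * y0) ^ p" using x0 y0 by (simp add: power_mult_distrib)
  moreover have "eqv TP (red e (p * N) (phi (x0 * y0) ^ p)) (u * w)"
  proof -
    have "eqv TP (red e (p * N) (phi (x0 * y0) ^ p)) (phi (x0 * y0) ^ p)" by (rule red_eqv)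
    also have "eqv TP \<dots> ((phi x0 * phi y0) ^ p)" by (rule frob_mu[OF phi_mult])
    also have "(phi x0 * phi y0) ^ p = phi x0 ^ p * phi y0 ^ p" by (simp add: power_mult_distrib)
    also have "eqv TP \<dots> (u * w)" unfolding x0 y0
      by (intro eqv_mult[OF dcP] eqv_sym[OF red_eqv])
    finally show ?thesis .
  qed
  ultimately show "\<exists>z. (x * y, z) \<in> base \<and> eqv TP z (u * w)" by (auto simp: base_def)
next
  fix x u u' assume "(x, u) \<in> base" "(x, u') \<in> base"
  obtain x0 where a: "x = x0 ^ p" "u = red e (p * N) (phi x0 ^ p)"
    using \<open>(x, u) \<in> base\<close> by (auto simp: base_def)
  obtain x1 where b: "x = x1 ^ p" "u' = red e (p * N) (phi x1 ^ p)"
    using \<open>(x, u') \<in> base\<close> by (auto simp: base_def)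
  have "x0 = x1" using a(1) b(1) frob_inj by simp
  thus "u = u'" using a b by simp
next
  fix x u assume "(x, u) \<in> base"
  then obtain x0 where x0: "x = x0 ^ p" "u = red e (p * N) (phi x0 ^ p)" by (auto simp: base_def)
  show "reduced e (p * N) u" using x0 by (simp add: reduced_red)
  have "eqv TN u (phi x0 ^ p)" using x0 red_eqv eqv_subset TN_TP by blast
  also have "eqv TN (phi x0 ^ p) (phi x)" using x0 phi_power eqv_sym by blast
  finally show "eqv TN u (phi x)" .
qed simp

end



context ext_setup
begin

lemma good_chain:
  assumes C: "C \<in> chains {G. good G}" and ne: "C \<noteq> {}"
  shows "good (\<Union>C)"
proof -
  have Cg: "\<And>G. G \<in> C \<Longrightarrow> good G" using C by (auto simp: chains_def)
  have ch: "\<And>A B. A \<in> C \<Longrightarrow> B \<in> C \<Longrightarrow> A \<subseteq> B \<or> B \<subseteq> A"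
    using C by (auto simp: chains_def chain_subset_def)
  have two: "\<exists>G\<in>C. a \<in> G \<and> b \<in> G" if "a \<in> \<Union>C" "b \<in> \<Union>C" for a b
  proof -
    from that obtain A B where "A \<in> C" "B \<in> C" "a \<in> A" "b \<in> B" by auto
    thus ?thesis using ch[of A B] by auto
  qed
  show ?thesis unfolding good_def
  proof (intro conjI allI impI)
    fix x u y w assume "(x, u) \<in> \<Union>C" "(y, w) \<in> \<Union>C"
    then obtain G where G: "G \<in> C" "(x, u) \<in> G" "(y, w) \<in> G" using two by blast
    have gG: "good G" using Cg G(1) .
    show "(x + y, u + w) \<in> \<Union>C" using gG G unfolding good_def by blast
    show "(x - y, u - w) \<in> \<Union>C" using gG G unfolding good_def by blast
    obtain z where "(x * y, z) \<in> G" "eqv TP z (u * w)" using gG G unfolding good_def by blast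
    thus "\<exists>z. (x * y, z) \<in> \<Union>C \<and> eqv TP z (u * w)" using G(1) by blast
  next
    fix x u u' assume "(x, u) \<in> \<Union>C" "(x, u') \<in> \<Union>C"
    then obtain G where G: "G \<in> C" "(x, u) \<in> G" "(x, u') \<in> G" using two by blast
    thus "u = u'" using Cg[OF G(1)] unfolding good_def by blast
  next
    fix x u assume "(x, u) \<in> \<Union>C"
    then obtain G where G: "G \<in> C" "(x, u) \<in> G" by blast
    show "reduced e (p * N) u" "eqv TN u (phi x)" using Cg[OF G(1)] G(2) unfolding good_def by blast+
  next
    obtain G where "G \<in> C" using ne by blast
    thus "base \<subseteq> \<Union>C" using Cg unfolding good_def by blast
  qed
qed

end

locale ext_step = ext_setup +
  fixes M :: "('a \<times> 'a ps) set" and a :: 'a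
  assumes gM: "good M" and aL: "a \<notin> Domain M"
begin

abbreviation "L \<equiv> Domain M"
definition g :: "'a \<Rightarrow> 'a ps" where "g x = (THE u. (x, u) \<in> M)"

lemma M_clos: "(x, u) \<in> M \<Longrightarrow> (y, w) \<in> M \<Longrightarrow>
        (x + y, u + w) \<in> M \<and> (x - y, u - w) \<in> M \<and> (\<exists>z. (x * y, z) \<in> M \<and> eqv TP z (u * w))"
  using gM unfolding good_def by blast
lemma M_fun: "(x, u) \<in> M \<Longrightarrow> (x, u') \<in> M \<Longrightarrow> u = u'"
  using gM unfolding good_def by blast
lemma M_prop: "(x, u) \<in> M \<Longrightarrow> reduced e (p * N) u \<and> eqv TN u (phi x)"
  using gM unfolding good_def by blast
lemma M_base: "base \<subseteq> M"
  using gM unfolding good_def by blast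

lemma g_in: "x \<in> L \<Longrightarrow> (x, g x) \<in> M"
  unfolding g_def by (rule theI') (auto intro: M_fun)
lemma g_eq: "(x, u) \<in> M \<Longrightarrow> g x = u"
  using g_in M_fun by blast

lemma L_subr: "subr L"
  unfolding subr_def
proof (intro conjI ballI)
  have "(1 ^ p, red e (p * N) (phi 1 ^ p)) \<in> base" unfolding base_def by blast
  hence "(1 ^ p, red e (p * N) (phi 1 ^ p)) \<in> M" using M_base by blast
  thus "1 \<in> L" by force
next
  fix x y assume "x \<in> L" "y \<in> L"
  then obtain u w where "(x, u) \<in> M" "(y, w) \<in> M" by blast
  from M_clos[OF this] show "x + y \<in> L" "x - y \<in> L" "x * y \<in> L" by blast+
qed

lemma Kp_L: "Kp \<subseteq> L"
proof
  fix x :: 'a assume "x \<in> Kp"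
  then obtain y where "x = y ^ p" by (auto simp: Kp_def p_def)
  hence "(x, red e (p * N) (phi y ^ p)) \<in> M" using M_base by (auto simp: base_def)
  thus "x \<in> L" by force
qed

lemma g_add: "x \<in> L \<Longrightarrow> y \<in> L \<Longrightarrow> g (x + y) = g x + g y"
  using M_clos[OF g_in g_in] g_eq by blast
lemma g_diff: "x \<in> L \<Longrightarrow> y \<in> L \<Longrightarrow> g (x - y) = g x - g y"
  using M_clos[OF g_in g_in] g_eq by blast
lemma g_mult: "x \<in> L \<Longrightarrow> y \<in> L \<Longrightarrow> eqv TP (g (x * y)) (g x * g y)"
  using M_clos[OF g_in g_in] g_eq by blast
lemma g_red: "x \<in> L \<Longrightarrow> reduced e (p * N) (g x)"
  using M_prop[OF g_in] by blast
lemma g_phi: "x \<in> L \<Longrightarrow> eqv TN (g x) (phi x)"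
  using M_prop[OF g_in] by blast
lemma g_0: "g 0 = 0"
  using g_diff[of 1 1] subr_1[OF L_subr] by simp
lemma g_pow: "g (x ^ p) = red e (p * N) (phi x ^ p)"
  by (rule g_eq) (use M_base in \<open>auto simp: base_def\<close>)
lemma g_1: "eqv TP (g 1) 1"
proof -
  have "g 1 = red e (p * N) (phi 1 ^ p)" using g_pow[of 1] by simp
  also have "eqv TP \<dots> (phi 1 ^ p)" by (rule red_eqv)
  also have "eqv TP \<dots> (1 ^ p)" by (rule frob_mu[OF phi_one])
  finally show ?thesis by simp
qed

abbreviation "b \<equiv> phi a"
definition Gh :: "'a poly \<Rightarrow> 'a ps" where "Gh f = poly (map_poly g f) b"

lemma map_g_add: "inL L f \<Longrightarrow> inL L h \<Longrightarrow> map_poly g (f + h) = map_poly g f + map_poly g h"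
  by (rule poly_eqI) (simp add: coeff_map_poly g_0 g_add inL_def)
lemma map_g_diff: "inL L f \<Longrightarrow> inL L h \<Longrightarrow> map_poly g (f - h) = map_poly g f - map_poly g h"
  by (rule poly_eqI) (simp add: coeff_map_poly g_0 g_diff inL_def)
lemma Gh_add: "inL L f \<Longrightarrow> inL L h \<Longrightarrow> Gh (f + h) = Gh f + Gh h"
  by (simp add: Gh_def map_g_add)
lemma Gh_diff: "inL L f \<Longrightarrow> inL L h \<Longrightarrow> Gh (f - h) = Gh f - Gh h"
  by (simp add: Gh_def map_g_diff)
lemma Gh_const: "Gh [:x:] = g x"
  by (simp add: Gh_def map_poly_pCons g_0)

lemma Gh_mult: "inL L f \<Longrightarrow> inL L h \<Longrightarrow> eqv TP (Gh (f * h)) (Gh f * Gh h)"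
proof (induction f)
  case 0 thus ?case by (simp add: Gh_def)
next
  case (pCons c f)
  have cL: "c \<in> L" and fL: "inL L f" using pCons.prems(1) by (auto simp: inL_pCons)
  have hL: "inL L h" by fact
  have sL: "inL L (smult c h)" by (rule inL_smult[OF L_subr cL hL])
  have fhL: "inL L (f * h)" by (rule inL_mult[OF L_subr fL hL])
  have pL: "inL L (pCons 0 (f * h))" using fhL subr_0[OF L_subr] by (simp add: inL_pCons)
  have "Gh (pCons c f * h) = Gh (smult c h) + Gh (pCons 0 (f * h))"
    using Gh_add[OF sL pL] by simp
  also have "Gh (pCons 0 (f * h)) = b * Gh (f * h)" by (simp add: Gh_def map_poly_pCons g_0)
  also have "Gh (smult c h) = poly (map_poly g (smult c h)) b" by (simp add: Gh_def)
  also have "eqv TP (poly (map_poly g (smult c h)) b + b * Gh (f * h))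
                    (poly (smult (g c) (map_poly g h)) b + b * (Gh f * Gh h))"
  proof (intro eqv_add eqv_mult_left[OF dcP] pCons.IH fL hL poly_eqv[OF dcP])
    fix i
    show "eqv TP (coeff (map_poly g (smult c h)) i) (coeff (smult (g c) (map_poly g h)) i)"
      using cL hL by (simp add: coeff_map_poly g_0 g_mult inL_def)
  qed
  also have "poly (smult (g c) (map_poly g h)) b + b * (Gh f * Gh h) = Gh (pCons c f) * Gh h"
    by (simp add: Gh_def map_poly_pCons g_0 algebra_simps)
  finally show ?case .
qed

abbreviation "gp \<equiv> monom 1 p - [:a ^ p:]"

lemma Gh_gp: "eqv TP (Gh gp) 0"
proof -
  have apL: "a ^ p \<in> L" using Kp_L by (auto simp: Kp_def p_def)
  have "Gh gp = Gh (monom 1 p) - Gh [:a ^ p:]"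
    by (rule Gh_diff) (auto intro: inL_monom inL_const L_subr subr_1 apL)
  also have "Gh (monom 1 p) = g 1 * b ^ p" by (simp add: Gh_def map_poly_monom g_0 poly_monom)
  also have "Gh [:a ^ p:] = red e (p * N) (b ^ p)" by (simp add: Gh_const g_pow)
  also have "eqv TP (g 1 * b ^ p - red e (p * N) (b ^ p)) (1 * b ^ p - b ^ p)"
    by (intro eqv_diff eqv_mult[OF dcP] g_1 red_eqv eqv_refl)
  finally show ?thesis by simp
qed

lemma Gh_zero: assumes "inL L f" "poly f a = 0" shows "eqv TP (Gh f) 0"
proof -
  obtain q where q: "inL L q" "f = gp * q"
    using divides_g[OF charp L_subr Kp_L aL assms] p_def by auto
  have gpL: "inL L gp" using Kp_L
    by (intro inL_diff inL_monom inL_const L_subr subr_1) (auto simp: Kp_def p_def)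
  have "eqv TP (Gh f) (Gh gp * Gh q)" unfolding q(2) by (rule Gh_mult[OF gpL q(1)])
  also have "eqv TP (Gh gp * Gh q) (0 * Gh q)" by (intro eqv_mult[OF dcP] Gh_gp eqv_refl)
  finally show ?thesis by simp
qed

lemma Gh_cong: assumes "inL L f" "inL L h" "poly f a = poly h a" shows "eqv TP (Gh f) (Gh h)"
proof -
  have "eqv TP (Gh (f - h)) 0" using assms by (intro Gh_zero inL_diff L_subr) auto
  thus ?thesis using Gh_diff[OF assms(1,2)] by (simp add: eqv_def)
qed

lemma Gh_phi: assumes "inL L f" shows "eqv TN (Gh f) (phi (poly f a))"
proof -
  have "eqv TN (Gh f) (poly (map_poly phi f) b)" unfolding Gh_def
    by (rule poly_eqv[OF dcN]) (use assms in \<open>simp add: coeff_map_poly g_0 phi_0 g_phi inL_def\<close>)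
  also have "eqv TN \<dots> (phi (poly f a))" by (rule eqv_sym[OF phi_poly])
  finally show ?thesis .
qed

definition M' :: "('a \<times> 'a ps) set" where
  "M' = {(poly f a, red e (p * N) (Gh f)) | f. inL L f}"

lemma M_M': "M \<subseteq> M'"
proof
  fix z assume "z \<in> M"
  then obtain x u where z: "z = (x, u)" "(x, u) \<in> M" by (cases z) auto
  hence xL: "x \<in> L" by blast
  have "u = g x" using g_eq z by simp
  also have "\<dots> = red e (p * N) (Gh [:x:])" using red_reduced[OF g_red[OF xL]] by (simp add: Gh_const)
  finally show "z \<in> M'" unfolding M'_def using z inL_const[OF L_subr xL]
    by (intro CollectI exI[of _ "[:x:]"]) auto
qed

lemma a_M': "a \<in> Domain M'"
proof -
  have "inL L [:0, 1:]" using subr_0[OF L_subr] subr_1[OF L_subr] by (simp add: inL_pCons inL_0[OF L_subr])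
  thus ?thesis unfolding M'_def by force
qed

lemma good_M': "good M'"
  unfolding good_def
proof (intro conjI allI impI)
  fix x u y w assume "(x, u) \<in> M'" "(y, w) \<in> M'"
  then obtain f h where f: "inL L f" "x = poly f a" "u = red e (p * N) (Gh f)"
    and h: "inL L h" "y = poly h a" "w = red e (p * N) (Gh h)" by (auto simp: M'_def)
  have "x + y = poly (f + h) a" "u + w = red e (p * N) (Gh (f + h))"
    using f h by (auto simp: Gh_add red_add)
  thus "(x + y, u + w) \<in> M'" unfolding M'_def using inL_add[OF L_subr f(1) h(1)] by blast
  have "x - y = poly (f - h) a" "u - w = red e (p * N) (Gh (f - h))"
    using f h by (auto simp: Gh_diff red_diff)
  thus "(x - y, u - w) \<in> M'" unfolding M'_def using inL_diff[OF L_subr f(1) h(1)] by blast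
  have "(x * y, red e (p * N) (Gh (f * h))) \<in> M'"
    unfolding M'_def using inL_mult[OF L_subr f(1) h(1)] f h by (intro CollectI exI[of _ "f * h"]) auto
  moreover have "eqv TP (red e (p * N) (Gh (f * h))) (u * w)"
  proof -
    have "eqv TP (red e (p * N) (Gh (f * h))) (Gh (f * h))" by (rule red_eqv)
    also have "eqv TP \<dots> (Gh f * Gh h)" by (rule Gh_mult[OF f(1) h(1)])
    also have "eqv TP \<dots> (u * w)" unfolding f h
      by (intro eqv_mult[OF dcP] eqv_sym[OF red_eqv])
    finally show ?thesis .
  qed
  ultimately show "\<exists>z. (x * y, z) \<in> M' \<and> eqv TP z (u * w)" by blast
next
  fix x u u' assume "(x, u) \<in> M'" "(x, u') \<in> M'"
  then obtain f h where f: "inL L f" "x = poly f a" "u = red e (p * N) (Gh f)"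
    and h: "inL L h" "x = poly h a" "u' = red e (p * N) (Gh h)" by (auto simp: M'_def)
  show "u = u'" unfolding f h by (rule red_cong, rule Gh_cong) (use f h in auto)
next
  fix x u assume "(x, u) \<in> M'"
  then obtain f where f: "inL L f" "x = poly f a" "u = red e (p * N) (Gh f)" by (auto simp: M'_def)
  show "reduced e (p * N) u" using f by (simp add: reduced_red)
  have "eqv TN u (Gh f)" using f red_eqv eqv_subset TN_TP by blast
  also have "eqv TN (Gh f) (phi x)" using Gh_phi[OF f(1)] f by simp
  finally show "eqv TN u (phi x)" .
next
  show "base \<subseteq> M'" using M_base M_M' by blast
qed

end



context ext_setup
begin

lemma exists_full: "\<exists>M. good M \<and> Domain M = UNIV"
proof -
  have "\<forall>C\<in>chains {G. good G}. \<exists>U\<in>{G. good G}. \<forall>X\<in>C. X \<subseteq> U"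
  proof
    fix C assume C: "C \<in> chains {G. good G}"
    show "\<exists>U\<in>{G. good G}. \<forall>X\<in>C. X \<subseteq> U"
    proof (cases "C = {}")
      case True thus ?thesis using good_base by auto
    next
      case False thus ?thesis using good_chain[OF C False] by blast
    qed
  qed
  from Zorn_Lemma2[OF this] obtain M where M: "good M" "\<And>X. good X \<Longrightarrow> M \<subseteq> X \<Longrightarrow> X = M" by blast
  have "Domain M = UNIV"
  proof (rule ccontr)
    assume "Domain M \<noteq> UNIV"
    then obtain a where a: "a \<notin> Domain M" by blast
    interpret ext_step e N p phi M a by unfold_locales (use M(1) a in auto)
    have "M' = M" using M(2)[OF good_M' M_M'] .
    thus False using a_M' a by simp
  qed
  thus ?thesis using M(1) by blast
qed

lemma exists_psi:
  "\<exists>psi. (\<forall>x y. psi (x + y) = psi x + psi y) \<and> (\<forall>x y. eqv TP (psi (x * y)) (psi x * psi y))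
      \<and> eqv TP (psi 1) 1 \<and> (\<forall>x. eqv TN (psi x) (phi x))"
proof -
  obtain M where M: "good M" "Domain M = UNIV" using exists_full by blast
  define psi where "psi x = (THE u. (x, u) \<in> M)" for x
  have funM: "\<And>x u u'. (x, u) \<in> M \<Longrightarrow> (x, u') \<in> M \<Longrightarrow> u = u'" using M(1) unfolding good_def by blast
  have pin: "(x, psi x) \<in> M" for x
  proof -
    have "x \<in> Domain M" using M(2) by simp
    thus ?thesis unfolding psi_def by (auto intro: theI' funM)
  qed
  have peq: "\<And>x u. (x, u) \<in> M \<Longrightarrow> psi x = u" using pin funM by blast
  have clos: "\<And>x u y w. (x, u) \<in> M \<Longrightarrow> (y, w) \<in> M \<Longrightarrow>
        (x + y, u + w) \<in> M \<and> (\<exists>z. (x * y, z) \<in> M \<and> eqv TP z (u * w))"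
    using M(1) unfolding good_def by blast
  have "psi (x + y) = psi x + psi y" for x y using clos[OF pin pin] peq by blast
  moreover have "eqv TP (psi (x * y)) (psi x * psi y)" for x y using clos[OF pin pin] peq by blast
  moreover have "eqv TP (psi 1) 1"
  proof -
    have "(1 ^ p, red e (p * N) (phi 1 ^ p)) \<in> base" unfolding base_def by blast
    hence "(1 ^ p, red e (p * N) (phi 1 ^ p)) \<in> M" using M(1) unfolding good_def by blast
    hence "psi 1 = red e (p * N) (phi 1 ^ p)" using peq by simp
    also have "eqv TP \<dots> (phi 1 ^ p)" by (rule red_eqv)
    also have "eqv TP \<dots> (1 ^ p)" by (rule frob_mu[OF phi_one])
    finally show ?thesis by simp
  qed
  moreover have "eqv TN (psi x) (phi x)" for x using M(1) pin unfolding good_def by blast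
  ultimately show ?thesis by blast
qed

end

lift_definition hsps :: "nat \<Rightarrow> nat \<Rightarrow> ((nat \<Rightarrow> nat) \<Rightarrow> 'a::comm_ring_1 \<Rightarrow> 'a) \<Rightarrow> 'a \<Rightarrow> 'a ps" is
  "\<lambda>e N D x k. if k \<in> trunc_idx e N then D k x else 0"
  using trunc_fsupp by auto

lemma coe_hsps: "coe (hsps e N D x) k = (if k \<in> trunc_idx e N then D k x else 0)"
  by transfer simp

lemma hs_step:
  fixes D :: "(nat \<Rightarrow> nat) \<Rightarrow> 'a::field \<Rightarrow> 'a"
  assumes c: "CHAR('a) > 0" and N: "N > 0" and hs: "HS_family (trunc_idx e N) D"
  shows "\<exists>D'. HS_family (trunc_idx e (CHAR('a) * N)) D' \<and> (\<forall>i\<in>trunc_idx e N. D' i = D i)"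
proof -
  let ?T = "trunc_idx e N"
  have D0: "D (\<lambda>_. 0) = id"
    and Dadd: "\<And>k x y. k \<in> ?T \<Longrightarrow> D k (x + y) = D k x + D k y"
    and D1: "\<And>k. k \<in> ?T \<Longrightarrow> D k 1 = (if k = (\<lambda>_. 0) then 1 else 0)"
    and Dmul: "\<And>k x y. k \<in> ?T \<Longrightarrow> D k (x * y) = (\<Sum>i\<in>{i. \<forall>l. i l \<le> k l}. D i x * D (\<lambda>l. k l - i l) y)"
    using hs unfolding HS_family_def by blast+
  define phi where "phi = hsps e N D"
  have dcl: "\<And>k i. k \<in> ?T \<Longrightarrow> i \<in> down k \<Longrightarrow> i \<in> ?T \<and> (\<lambda>l. k l - i l) \<in> ?T"
    using trunc_dclosed unfolding dclosed_def down_def by fastforce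
  interpret ext_setup e N "CHAR('a)" phi
  proof
    show "CHAR('a) = CHAR('a)" "CHAR('a) > 0" by (fact refl, fact c)
    show "reduced e N (phi x)" for x by (simp add: reduced_def phi_def coe_hsps)
    show "phi (x + y) = phi x + phi y" for x y by (rule ps_eqI) (simp add: phi_def coe_hsps Dadd)
    show "eqv ?T (phi (x * y)) (phi x * phi y)" for x y
      unfolding eqv_def
    proof
      fix k assume k: "k \<in> ?T"
      have "coe (phi x * phi y) k = (\<Sum>i\<in>down k. D i x * D (\<lambda>l. k l - i l) y)"
        unfolding coe_times using k trunc_fsupp[OF k] dcl[OF k] by (auto simp: phi_def coe_hsps intro!: sum.cong)
      also have "\<dots> = D k (x * y)" using Dmul[OF k] by (simp add: down_def)
      finally show "coe (phi (x * y)) k = coe (phi x * phi y) k" using k by (simp add: phi_def coe_hsps)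
    qed
    show "eqv ?T (phi 1) 1" by (simp add: eqv_def phi_def coe_hsps coe_one D1)
  qed
  obtain psi where psi: "\<And>x y. psi (x + y) = psi x + psi y" "\<And>x y. eqv TP (psi (x * y)) (psi x * psi y)"
    "eqv TP (psi 1) 1" "\<And>x. eqv ?T (psi x) (phi x)"
    using exists_psi by blast
  define D' where "D' k x = coe (psi x) k" for k x
  have agree: "\<forall>i\<in>?T. D' i = D i"
    using psi(4) by (auto simp: eqv_def D'_def phi_def coe_hsps)
  have "(\<lambda>_. 0::nat) \<in> ?T" using N by (simp add: trunc_idx_def mindex_def)
  hence "D' (\<lambda>_. 0) = id" using agree D0 by simp
  moreover have "\<forall>k\<in>TP. \<forall>x y. D' k (x + y) = D' k x + D' k y" by (simp add: D'_def psi(1))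
  moreover have "\<forall>k\<in>TP. D' k 1 = (if k = (\<lambda>_. 0) then 1 else 0)"
    using psi(3) by (simp add: D'_def eqv_def coe_one)
  moreover have "\<forall>k\<in>TP. \<forall>x y. D' k (x * y) = (\<Sum>i\<in>{i. \<forall>l. i l \<le> k l}. D' i x * D' (\<lambda>l. k l - i l) y)"
  proof (intro ballI allI)
    fix k x y assume k: "k \<in> TP"
    have "D' k (x * y) = coe (psi x * psi y) k" using psi(2) k by (simp add: D'_def eqv_def)
    also have "\<dots> = (\<Sum>i\<in>{i. \<forall>l. i l \<le> k l}. D' i x * D' (\<lambda>l. k l - i l) y)"
      using trunc_fsupp[OF k] by (simp add: coe_times D'_def down_def)
    finally show "D' k (x * y) = (\<Sum>i\<in>{i. \<forall>l. i l \<le> k l}. D' i x * D' (\<lambda>l. k l - i l) y)" .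
  qed
  ultimately have "HS_family TP D'" unfolding HS_family_def by blast
  thus ?thesis using agree by blast
qed



primrec seqD :: "nat \<Rightarrow> nat \<Rightarrow> ((nat \<Rightarrow> nat) \<Rightarrow> 'a::field \<Rightarrow> 'a) \<Rightarrow> nat \<Rightarrow> ((nat \<Rightarrow> nat) \<Rightarrow> 'a \<Rightarrow> 'a)" where
  "seqD e m D 0 = D"
| "seqD e m D (Suc n) = (SOME D'. HS_family (trunc_idx e (CHAR('a) ^ (m + Suc n))) D' \<and>
      (\<forall>i\<in>trunc_idx e (CHAR('a) ^ (m + n)). D' i = seqD e m D n i))"

lemma seqD_props:
  fixes D :: "(nat \<Rightarrow> nat) \<Rightarrow> 'a::field \<Rightarrow> 'a"
  assumes c: "CHAR('a) > 0" and hs: "HS_family (trunc_idx e (CHAR('a) ^ m)) D"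
  shows "HS_family (trunc_idx e (CHAR('a) ^ (m + n))) (seqD e m D n) \<and>
         (\<forall>i\<in>trunc_idx e (CHAR('a) ^ (m + n)). seqD e m D (Suc n) i = seqD e m D n i)"
proof (induction n)
  case 0
  have ex: "\<exists>D'. HS_family (trunc_idx e (CHAR('a) * CHAR('a) ^ (m + 0))) D' \<and>
      (\<forall>i\<in>trunc_idx e (CHAR('a) ^ (m + 0)). D' i = seqD e m D 0 i)"
    using hs_step[OF c _ ] hs c by simp
  show ?case using someI_ex[OF ex] hs by (simp add: mult.commute)
next
  case (Suc n)
  have h1: "HS_family (trunc_idx e (CHAR('a) ^ (m + Suc n))) (seqD e m D (Suc n))"
  proof -
    have ex: "\<exists>D'. HS_family (trunc_idx e (CHAR('a) ^ (m + Suc n))) D' \<and>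
      (\<forall>i\<in>trunc_idx e (CHAR('a) ^ (m + n)). D' i = seqD e m D n i)"
      using hs_step[OF c _ conjunct1[OF Suc.IH]] c by (simp add: mult.commute)
    show ?thesis using someI_ex[OF ex] by simp
  qed
  have ex: "\<exists>D'. HS_family (trunc_idx e (CHAR('a) ^ (m + Suc (Suc n)))) D' \<and>
      (\<forall>i\<in>trunc_idx e (CHAR('a) ^ (m + Suc n)). D' i = seqD e m D (Suc n) i)"
    using hs_step[OF c _ h1] c by (simp add: mult.commute)
  show ?case using someI_ex[OF ex] h1 by simp
qed

lemma seqD_agree:
  fixes D :: "(nat \<Rightarrow> nat) \<Rightarrow> 'a::field \<Rightarrow> 'a"
  assumes c: "CHAR('a) > 0" and hs: "HS_family (trunc_idx e (CHAR('a) ^ m)) D"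
    and i: "i \<in> trunc_idx e (CHAR('a) ^ (m + n))" and nn: "n \<le> n'"
  shows "seqD e m D n' i = seqD e m D n i"
  using nn
proof (induction n' rule: dec_induct)
  case base thus ?case by simp
next
  case (step k)
  have "CHAR('a) ^ (m + n) \<le> CHAR('a) ^ (m + k)" using step(1) c by (intro power_increasing) auto
  hence "i \<in> trunc_idx e (CHAR('a) ^ (m + k))" using trunc_mono i by blast
  thus ?case using seqD_props[OF c hs, of k] step(3) by simp
qed

lemma mindex_trunc:
  fixes p :: nat
  assumes p: "p \<ge> 2" and k: "k \<in> mindex e"
  shows "k \<in> trunc_idx e (p ^ (m + sum k {..<e}))"
  unfolding trunc_idx_def
proof (intro CollectI conjI allI impI k)
  fix l assume l: "l < e"
  let ?s = "sum k {..<e}"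
  have "k l \<le> ?s" using l by (intro member_le_sum) auto
  also have "?s < 2 ^ ?s" by (rule less_exp)
  also have "(2::nat) ^ ?s \<le> p ^ ?s" using p by (rule power_mono) simp
  also have "p ^ ?s \<le> p ^ (m + ?s)" using p by (intro power_increasing) auto
  finally show "k l < p ^ (m + ?s)" .
qed

theorem corollary2p5:
  fixes D :: "(nat \<Rightarrow> nat) \<Rightarrow> 'a::field \<Rightarrow> 'a"
  assumes "CHAR('a) > 0" and "e > 0" and "m > 0"
    and "truncated_HS_derivation m e D"
  shows "\<exists>D'. HS_derivation e D' \<and> (\<forall>i\<in>trunc_idx e (CHAR('a) ^ m). D' i = D i)"
proof -
  let ?p = "CHAR('a)"
  have c: "?p > 0" by fact
  have hs: "HS_family (trunc_idx e (?p ^ m)) D"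
    using assms(4) by (simp add: truncated_HS_derivation_def)
  have p2: "?p \<ge> 2" using prime_ge_2_nat[OF prime_CHAR_semidom[OF c]] .
  define s where "s k = sum k {..<e}" for k :: "nat \<Rightarrow> nat"
  define Dinf where "Dinf k = seqD e m D (s k) k" for k
  have kT: "\<And>k. k \<in> mindex e \<Longrightarrow> k \<in> trunc_idx e (?p ^ (m + s k))"
    unfolding s_def by (rule mindex_trunc[OF p2])
  have Dn: "Dinf k = seqD e m D n k" if "k \<in> mindex e" "s k \<le> n" for k n
    using seqD_agree[OF c hs kT[OF that(1)] that(2)] by (simp add: Dinf_def)
  have HS: "HS_family (mindex e) Dinf"
    unfolding HS_family_def
  proof (intro conjI ballI allI)
    have "(\<lambda>_. 0::nat) \<in> mindex e" by (simp add: mindex_def)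
    hence "Dinf (\<lambda>_. 0) = seqD e m D 0 (\<lambda>_. 0)" using Dn[of "\<lambda>_. 0" 0] by (simp add: s_def)
    thus "Dinf (\<lambda>_. 0) = id" using hs by (simp add: HS_family_def)
  next
    fix k assume k: "k \<in> mindex e"
    let ?n = "s k"
    have hsn: "HS_family (trunc_idx e (?p ^ (m + ?n))) (seqD e m D ?n)"
      using seqD_props[OF c hs] by blast
    have kk: "k \<in> trunc_idx e (?p ^ (m + ?n))" by (rule kT[OF k])
    have Dk: "Dinf k = seqD e m D ?n k" using Dn[OF k] by simp
    have sub: "\<And>i. i \<in> {i. \<forall>l. i l \<le> k l} \<Longrightarrow> Dinf i = seqD e m D ?n i \<and> Dinf (\<lambda>l. k l - i l) = seqD e m D ?n (\<lambda>l. k l - i l)"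
    proof -
      fix i assume i: "i \<in> {i. \<forall>l. i l \<le> k l}"
      have im: "i \<in> mindex e" unfolding mindex_def
      proof (intro CollectI allI impI)
        fix l assume "e \<le> l"
        hence "k l = 0" using k by (simp add: mindex_def)
        moreover have "i l \<le> k l" using i by simp
        ultimately show "i l = 0" by simp
      qed
      have jm: "(\<lambda>l. k l - i l) \<in> mindex e" using k by (auto simp: mindex_def)
      have "s i \<le> ?n" unfolding s_def using i by (intro sum_mono) auto
      moreover have "s (\<lambda>l. k l - i l) \<le> ?n" unfolding s_def by (intro sum_mono) auto
      ultimately show "Dinf i = seqD e m D ?n i \<and> Dinf (\<lambda>l. k l - i l) = seqD e m D ?n (\<lambda>l. k l - i l)"
        using Dn im jm by blast
    qed
    fix x y
    show "Dinf k (x + y) = Dinf k x + Dinf k y" using hsn kk Dk by (simp add: HS_family_def)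
    show "Dinf k (x * y) = (\<Sum>i\<in>{i. \<forall>l. i l \<le> k l}. Dinf i x * Dinf (\<lambda>l. k l - i l) y)"
      using hsn kk Dk sub by (simp add: HS_family_def)
  next
    fix k assume k: "k \<in> mindex e"
    show "Dinf k 1 = (if k = (\<lambda>_. 0) then 1 else 0)"
    proof -
      have hsn: "HS_family (trunc_idx e (?p ^ (m + s k))) (seqD e m D (s k))"
        using seqD_props[OF c hs] by blast
      have "Dinf k = seqD e m D (s k) k" using Dn[OF k] by simp
      thus ?thesis using hsn kT[OF k] unfolding HS_family_def by simp
    qed
  qed
  have agree: "\<forall>i\<in>trunc_idx e (?p ^ m). Dinf i = D i"
  proof
    fix i assume i: "i \<in> trunc_idx e (?p ^ m)"
    have "i \<in> mindex e" using i by (simp add: trunc_idx_def)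
    hence "Dinf i = seqD e m D (s i) i" using Dn by simp
    also have "\<dots> = seqD e m D 0 i" by (rule seqD_agree[OF c hs]) (use i in simp_all)
    finally show "Dinf i = D i" by simp
  qed
  show ?thesis using HS agree by (auto simp: HS_derivation_def)
qed


end
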